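(* Let $p$ be an odd prime, $q=p^e$ with $e\ge 1$, and let $k$ be an integer with $1\le k\le e$. Then $F_{p^k}(1,x)$ is a permutation polynomial of $\mathbb{F}_q$ if and only if $\gcd\!\left(\frac{p^k-1}{2},\,q-1\right)=1$.
   Context: For an integer $n\ge 1$, the $n$-th reversed Dickson polynomial of the third kind is $F_n(a,x)=\sum_{i=0}^{\lfloor n/2\rfloor}\frac{n-2i}{n-i}\binom{n-i}{i}(-x)^i a^{n-2i}$, where each coefficient $\frac{n-2i}{n-i}\binom{n-i}{i}$ is an integer (read in $\mathbb{F}_q$), and $F_0(a,x)=0$. A polynomial $f\in\mathbb{F}_q[x]$ is a permutation polynomial of $\mathbb{F}_q$ if $c\mapsto f(c)$ is a bijection of $\mathbb{F}_q$. *)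

theory Defs
  imports "HOL-Computational_Algebra.Computational_Algebra" "HOL-Library.Cardinality"
begin

text \<open>Integer coefficient (n-2i)/(n-i) * binom(n-i,i); the division is exact for 2i <= n, n >= 1.\<close>
definition rdick3_coeff :: "nat \<Rightarrow> nat \<Rightarrow> nat" where
  "rdick3_coeff n i = ((n - 2*i) * ((n - i) choose i)) div (n - i)"

definition rev_dickson3 :: "nat \<Rightarrow> 'a::comm_ring_1 \<Rightarrow> 'a poly" where
  "rev_dickson3 n a =
     (if n = 0 then 0
      else (\<Sum>i = 0..n div 2.
              smult (of_nat (rdick3_coeff n i) * a ^ (n - 2*i)) ([:0, -1:] ^ i)))"

definition permutation_polynomial :: "'a::{finite,comm_ring_1} poly \<Rightarrow> bool" where
  "permutation_polynomial f \<longleftrightarrow> bij (\<lambda>c. poly f c)"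

end

theory Submission imports Defs "HOL-Number_Theory.Residues" begin
hide_const (open) up_ring.coeff up_ring.monom

lemma rdick3_coeff_0: "n \<ge> 1 \<Longrightarrow> rdick3_coeff n 0 = 1"
  by (simp add: rdick3_coeff_def)

lemma rdick3_coeff_pos:
  assumes "1 \<le> j" "2*j \<le> n"
  shows "rdick3_coeff n j = ((n-j) choose j) - ((n-j-1) choose (j-1))"
    and "((n-j-1) choose (j-1)) \<le> ((n-j) choose j)"
proof -
  define a where "a = n - j"
  have aj: "j \<le> a" "a > 0" using assms unfolding a_def by auto
  have n2: "n - 2*j = a - j" unfolding a_def by simp
  have key: "j * (a choose j) = a * ((a-1) choose (j-1))"
    using times_binomial_minus1_eq[of j a] assms by simp
  have le: "j * (a choose j) \<le> a * (a choose j)" using aj by simp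
  have le2: "((a-1) choose (j-1)) \<le> (a choose j)"
    using le key aj by (metis mult_le_cancel1 mult.commute)
  have "(a - j) * (a choose j) = a * (a choose j) - j * (a choose j)"
    by (simp add: diff_mult_distrib)
  also have "\<dots> = a * ((a choose j) - ((a-1) choose (j-1)))"
    by (simp add: key diff_mult_distrib2)
  finally have eq: "(a - j) * (a choose j) = a * ((a choose j) - ((a-1) choose (j-1)))" .
  show "rdick3_coeff n j = ((n-j) choose j) - ((n-j-1) choose (j-1))"
    unfolding rdick3_coeff_def n2 a_def[symmetric] eq using aj by simp
  show "((n-j-1) choose (j-1)) \<le> ((n-j) choose j)" using le2 unfolding a_def by simp
qed

fun E :: "nat \<Rightarrow> 'a::comm_ring_1 poly" where
  "E 0 = 1"
| "E (Suc 0) = 1"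
| "E (Suc (Suc n)) = E (Suc n) + [:0,-1:] * E n"

lemma coeff_E: "coeff (E n :: 'a::comm_ring_1 poly) j = (-1)^j * of_nat ((n-j) choose j)"
proof (induction n arbitrary: j rule: E.induct)
  case 1 then show ?case by (cases j) auto
next
  case 2 then show ?case by (cases j) auto
next
  case (3 n)
  show ?case
  proof (cases j)
    case 0 then show ?thesis using 3 by simp
  next
    case (Suc i)
    have c: "(Suc n - i) choose Suc i = ((n - i) choose Suc i) + ((n-i) choose i)"
    proof (cases "i \<le> n")
      case True
      then have "Suc n - i = Suc (n - i)" by simp
      then show ?thesis by simp
    next
      case False
      then show ?thesis by (simp add: Suc_diff_le)
    qed
    have "coeff (E (Suc (Suc n)) :: 'a poly) j = coeff (E (Suc n)) (Suc i) - coeff (E n) i"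
      using Suc by (simp add: coeff_pCons_Suc)
    also have "\<dots> = (-1)^j * of_nat ((Suc n - i) choose Suc i)"
      using Suc 3 by (simp add: c algebra_simps)
    finally show ?thesis using Suc by simp
  qed
qed

lemma z_pow: "([:0,-1:] :: 'a::comm_ring_1 poly) ^ i = monom ((-1)^i) i"
proof -
  have "([:0,-1:] :: 'a poly) = monom (-1) 1" by (simp add: monom_Suc monom_0)
  then show ?thesis by (simp add: monom_power)
qed

lemma coeff_rd3: "n \<ge> 1 \<Longrightarrow> coeff (rev_dickson3 n (1::'a::comm_ring_1)) j =
   (if j \<le> n div 2 then (-1)^j * of_nat (rdick3_coeff n j) else 0)"
  by (simp add: rev_dickson3_def coeff_sum z_pow coeff_monom if_distrib mult.commute cong: if_cong)

lemma rd3_E: assumes "n \<ge> 2"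
  shows "rev_dickson3 n (1::'a::comm_ring_1) = E n - [:0,-1:] * E (n-2)"
proof (rule poly_eqI)
  fix j
  show "coeff (rev_dickson3 n (1::'a)) j = coeff (E n - [:0,-1:] * E (n-2)) j"
  proof (cases j)
    case 0 then show ?thesis using assms by (simp add: coeff_rd3 coeff_E rdick3_coeff_0)
  next
    case (Suc i)
    have rhs: "coeff (E n - [:0,-1:] * E (n-2) :: 'a poly) j
       = (-1)^j * (of_nat ((n-j) choose j) - of_nat ((n-j-1) choose (j-1)))"
      using Suc by (simp add: coeff_E algebra_simps)
    show ?thesis
    proof (cases "j \<le> n div 2")
      case True
      then have "1 \<le> j" "2*j \<le> n" using Suc by auto
      note r = rdick3_coeff_pos[OF this]
      have "coeff (rev_dickson3 n (1::'a)) j = (-1)^j * of_nat (rdick3_coeff n j)" using True assms by (simp add: coeff_rd3)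
      then show ?thesis unfolding rhs r(1) of_nat_diff[OF r(2)] by simp
    next
      case False
      have z: "(n-j) choose j = 0" "(n-j-1) choose (j-1) = 0" using Suc assms False by (auto intro!: binomial_eq_0 simp del: One_nat_def)
      show ?thesis using False assms unfolding rhs z by (simp add: coeff_rd3)
    qed
  qed
qed

lemma pc_z: "pcompose [:0,-1:] [:0,1,-1::'a::comm_ring_1:] = - ([:0,1:] * [:1,-1:])"
  by (simp add: pcompose_pCons)

lemma w_E: "[:-1,2::'a::comm_ring_1:] * pcompose (E n) [:0,1,-1:]
   = [:0,1:]^(Suc n) - [:1,-1:]^(Suc n)"
proof (induction n rule: E.induct)
  case 1
  have "pcompose (E 0) [:0,1,-1::'a:] = 1" by (simp add: pcompose_1)
  then show ?case by (simp add: numeral_2_eq_2 algebra_simps del: E.simps)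
next
  case 2
  have "pcompose (E (Suc 0)) [:0,1,-1::'a:] = 1" by (simp add: pcompose_1)
  then show ?case by (simp add: numeral_2_eq_2 algebra_simps del: E.simps)
next
  case (3 n)
  define y :: "'a poly" where "y = [:0,1:]"
  define u :: "'a poly" where "u = [:1,-1:]"
  define w :: "'a poly" where "w = [:-1,2:]"
  have yu: "y + u = 1" unfolding y_def u_def by (simp add: one_pCons)
  have "w * pcompose (E (Suc (Suc n))) [:0,1,-1:] = w * pcompose (E (Suc n)) [:0,1,-1:]
     - y * u * (w * pcompose (E n) [:0,1,-1:])"
  proof -
    have pm: "pcompose ([:0,-1:] * E n) [:0,1,-1::'a:] = - (y*u) * pcompose (E n) [:0,1,-1:]"
      unfolding pcompose_mult pc_z y_def u_def ..
    show ?thesis unfolding E.simps(3) pcompose_add pm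
      by (simp add: algebra_simps del: E.simps)
  qed
  also have "\<dots> = (y^Suc (Suc n) - u^Suc (Suc n)) - y*u*(y^Suc n - u^Suc n)"
    using 3 unfolding y_def u_def w_def by simp
  also have "\<dots> = y^Suc (Suc n) * (1 - u) - u^Suc(Suc n) * (1 - y)"
    by (simp add: algebra_simps)
  also have "\<dots> = y^Suc (Suc n) * y - u^Suc(Suc n) * u"
  proof -
    have u1: "1 - u = y" "1 - y = u" using yu by (metis add_diff_cancel_right', metis add_diff_cancel_left')
    show ?thesis by (simp only: u1)
  qed
  also have "\<dots> = y^Suc (Suc (Suc n)) - u^Suc(Suc(Suc n))"
    by (simp only: power_Suc2)
  finally show ?case unfolding y_def u_def w_def .
qed

lemma w_F: assumes "n \<ge> 2"
  shows "[:-1,2::'a::comm_ring_1:] * pcompose (rev_dickson3 n 1) [:0,1,-1:]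
   = [:0,1:]^n - [:1,-1:]^n"
proof -
  obtain m where m: "n = Suc (Suc m)" using assms by (metis add_2_eq_Suc le_Suc_ex)
  define y :: "'a poly" where "y = [:0,1:]"
  define u :: "'a poly" where "u = [:1,-1:]"
  define w :: "'a poly" where "w = [:-1,2:]"
  have yu: "y + u = 1" unfolding y_def u_def by (simp add: one_pCons)
  have "w * pcompose (rev_dickson3 n 1) [:0,1,-1:] = w * pcompose (E (Suc (Suc m))) [:0,1,-1:]
     + y * u * (w * pcompose (E m) [:0,1,-1:])"
  proof -
    have rd: "rev_dickson3 n (1::'a) = E (Suc (Suc m)) - [:0,-1:] * E m" using rd3_E[OF assms] m by simp
    have pm: "pcompose ([:0,-1:] * E m) [:0,1,-1::'a:] = - (y*u) * pcompose (E m) [:0,1,-1:]"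
      unfolding pcompose_mult pc_z y_def u_def ..
    show ?thesis unfolding rd pcompose_diff pm
      by (simp add: algebra_simps del: E.simps)
  qed
  also have "\<dots> = (y^Suc (Suc (Suc m)) - u^Suc (Suc (Suc m))) + y*u*(y^Suc m - u^Suc m)"
    unfolding y_def u_def w_def w_E by simp
  also have "\<dots> = y^Suc (Suc m) * (y + u) - u^Suc(Suc m) * (u + y)"
    by (simp add: algebra_simps)
  also have "\<dots> = y^n - u^n"
    using yu m by (simp add: add.commute)
  finally show ?thesis unfolding y_def u_def w_def .
qed

lemma pcompose_power': "pcompose (q ^ m) r = (pcompose q r) ^ m"
  by (induction m) (simp_all add: pcompose_mult pcompose_1)

lemma CHAR_card:
  assumes "prime p" "CARD('a::{finite,field}) = p ^ e"
  shows "CHAR('a) = p"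
proof -
  have pos: "CHAR('a) > 0" by (rule finite_imp_CHAR_pos) simp
  have pr: "prime CHAR('a)" by (rule prime_CHAR_semidom[OF pos])
  have "CHAR('a) dvd p ^ e" using CHAR_dvd_CARD[where 'a='a] assms(2) by simp
  then have "CHAR('a) dvd p" using pr prime_dvd_power by blast
  then show ?thesis using pr assms(1) primes_dvd_imp_eq by blast
qed

lemma CHAR_poly: "CHAR('a::{comm_ring_1} poly) = CHAR('a)"
  by (rule CHAR_eqI) (auto simp: of_nat_poly of_nat_eq_0_iff_char_dvd)

lemma main_poly:
  fixes p k :: nat
  assumes "prime p" "odd p" "k \<ge> 1" "CHAR('a::field) = p"
  shows "rev_dickson3 (p^k) (1::'a) = [:1,-4:] ^ ((p^k - 1) div 2)"
proof -
  define n where "n = p^k"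
  define y :: "'a poly" where "y = [:0,1:]"
  define u :: "'a poly" where "u = [:1,-1:]"
  define w :: "'a poly" where "w = [:-1,2:]"
  define Y :: "'a poly" where "Y = [:0,1,-1:]"
  have p3: "p \<ge> 3" using assms(1,2) prime_ge_2_nat[OF assms(1)] by (cases "p = 2") auto
  have "p^k \<ge> p^1" using assms(3) p3 by (intro power_increasing) auto
  then have n3: "n \<ge> 3" using p3 unfolding n_def by simp
  have oddn: "odd n" unfolding n_def using assms(2) by simp
  have cp: "prime CHAR('a poly)" using CHAR_poly[where 'a='a] assms by simp
  have nn: "n = CHAR('a poly) ^ k" using CHAR_poly[where 'a='a] assms unfolding n_def by simp
  have fd: "\<And>a b :: 'a poly. (a + b) ^ n = a ^ n + b ^ n"
    using freshmans_dream'[OF cp nn] by blast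
  have u_n: "u ^ n = 1 - y ^ n"
  proof -
    have "u = 1 + (- y)" unfolding u_def y_def by (simp add: one_pCons)
    then have "u ^ n = 1 + (- y) ^ n" using fd[of 1 "-y"] by simp
    also have "(- y) ^ n = - (y ^ n)" using oddn by simp
    finally show ?thesis by simp
  qed
  have two: "(2::'a poly) ^ n = 2" proof -
    have "(1 + 1 :: 'a poly) ^ n = 1 ^ n + 1 ^ n" by (rule fd)
    then show ?thesis by (simp only: one_add_one power_one)
  qed
  have w_n: "w ^ n = y ^ n - u ^ n"
  proof -
    have "w = 2 * y + (- 1)" unfolding w_def y_def by (simp add: numeral_poly one_pCons)
    then have "w ^ n = (2 * y) ^ n + (-1) ^ n" using fd[of "2*y" "-1"] by simp
    also have "\<dots> = 2 * y ^ n - 1" using oddn two by (simp add: power_mult_distrib)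
    finally show ?thesis unfolding u_n by simp
  qed
  have n2: "n \<ge> 2" using n3 by simp
  have "w * pcompose (rev_dickson3 n 1) Y = y ^ n - u ^ n"
    unfolding w_def Y_def y_def u_def by (rule w_F[OF n2])
  also have "\<dots> = w ^ n" using w_n by simp
  also have "\<dots> = w * w ^ (n - 1)" using n3 by (simp add: power_eq_if)
  finally have eq: "w * pcompose (rev_dickson3 n 1) Y = w * w ^ (n-1)" .
  have wnz: "w \<noteq> 0" unfolding w_def by simp
  have "pcompose (rev_dickson3 n 1) Y = w ^ (n-1)"
    using eq mult_left_cancel[OF wnz] by blast
  also have "n - 1 = 2 * ((n - 1) div 2)" using oddn n3 by simp
  also have "w ^ (2 * ((n - 1) div 2)) = (w^2) ^ ((n - 1) div 2)" by (simp add: power_mult)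
  also have "w ^ 2 = pcompose [:1,-4:] Y" unfolding w_def Y_def
    by (simp add: power2_eq_square pcompose_pCons algebra_simps)
  finally have "pcompose (rev_dickson3 n 1 - [:1,-4:] ^ ((n - 1) div 2)) Y = 0"
    by (simp add: pcompose_diff pcompose_power')
  moreover have "degree Y > 0" unfolding Y_def by simp
  ultimately show ?thesis using pcompose_eq_0 unfolding n_def by fastforce
qed

lemma ff_power_card: "(x::'a::{finite,field}) ^ CARD('a) = x"
proof (cases "x = 0")
  case False
  have "x * (\<Prod>y\<in>UNIV-{0}. x * y) = x * x ^ (card (UNIV :: 'a set) - 1) * \<Prod>(UNIV-{0})"
    by (simp add: prod.distrib mult_ac)
  also have "x * x ^ (card (UNIV :: 'a set) - 1) = x ^ Suc (card (UNIV :: 'a set) - 1)"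
    by (subst power_Suc) auto
  also have "Suc (card (UNIV :: 'a set) - 1) = card (UNIV :: 'a set)"
    using finite_UNIV_card_ge_0[where ?'a = 'a] by simp
  also have "(\<Prod>y\<in>UNIV-{0}. x * y) = (\<Prod>y\<in>UNIV-{0}. y)"
    by (rule prod.reindex_bij_witness[of _ "\<lambda>y. y / x" "\<lambda>y. x * y"]) (use False in auto)
  finally show ?thesis
    by simp
qed (use finite_UNIV_card_ge_0[where ?'a = 'a] in auto)

lemma ff_fermat: "(x::'a::{finite,field}) \<noteq> 0 \<Longrightarrow> x ^ (CARD('a) - 1) = 1"
proof -
  assume x: "x \<noteq> 0"
  have c: "CARD('a) = Suc (CARD('a) - 1)" using finite_UNIV_card_ge_0[where ?'a = 'a] by simp
  have "x * x ^ (CARD('a) - 1) = x * 1" using ff_power_card[of x] c by (metis mult.right_neutral power_Suc)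
  then show ?thesis using x by simp
qed

lemma power_bij_iff:
  assumes "m \<ge> 1"
  shows "bij (\<lambda>x::'a::{finite,field}. x ^ m) \<longleftrightarrow> gcd m (CARD('a) - 1) = 1"
proof
  assume b: "bij (\<lambda>x::'a. x ^ m)"
  show "gcd m (CARD('a) - 1) = 1"
  proof (rule ccontr)
    assume "gcd m (CARD('a) - 1) \<noteq> 1"
    then obtain r where r: "prime r" "r dvd gcd m (CARD('a) - 1)" using prime_factor_nat by blast
    have rm: "r dvd m" and rq: "r dvd CARD('a) - 1" using r by auto
    have "card {0::'a, 1} \<le> CARD('a)" by (rule card_mono) auto
    hence q2: "CARD('a) \<ge> 2" by simp
    hence qpos: "CARD('a) - 1 > 0" by simp
    define t where "t = (CARD('a) - 1) div r"
    have rt: "CARD('a) - 1 = r * t" using rq unfolding t_def by simp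
    have r2: "r \<ge> 2" using prime_ge_2_nat[OF r(1)] .
    have t1: "t \<ge> 1" using rt qpos by (cases t) auto
    have tlt: "t < CARD('a) - 1" using rt r2 t1 by (metis le_less_trans lessI mult_1 mult_less_mono1 one_less_numeral_iff semiring_norm(76) Suc_1 le_imp_less_Suc less_le_trans not_less zero_less_one) 
    define P :: "'a poly" where "P = monom 1 t - 1"
    have "P = monom 1 t + [:-1:]" unfolding P_def by (simp add: one_pCons)
    then have degP: "degree P = t" using t1
      by (simp add: degree_add_eq_left degree_monom_eq)
    have Pnz: "P \<noteq> 0" using degP t1 by auto
    have "\<exists>z::'a. z \<noteq> 0 \<and> z ^ t \<noteq> 1"
    proof (rule ccontr)
      assume "\<not> ?thesis"
      then have "UNIV - {0} \<subseteq> {x. poly P x = 0}" unfolding P_def by (auto simp: poly_monom)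
      then have "card (UNIV - {0::'a}) \<le> card {x. poly P x = 0}"
        by (intro card_mono poly_roots_finite Pnz)
      also have "\<dots> \<le> t" using card_poly_roots_bound[OF Pnz] degP by simp
      finally show False using tlt by (simp add: card_Diff_singleton)
    qed
    then obtain z :: 'a where z: "z \<noteq> 0" "z ^ t \<noteq> 1" by blast
    obtain s where s: "m = r * s" using rm by blast
    have "(z ^ t) ^ m = (z ^ (CARD('a) - 1)) ^ s" unfolding rt s by (simp add: power_mult[symmetric] mult_ac)
    also have "\<dots> = 1 ^ m" using ff_fermat[OF z(1)] by simp
    finally have "(z^t) ^ m = 1 ^ m" .
    then have "z ^ t = 1" using bij_is_inj[OF b] unfolding inj_def by blast
    then show False using z by simp
  qed
next
  assume g: "gcd m (CARD('a) - 1) = 1"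
  obtain s t where st: "m * s = (CARD('a) - 1) * t + gcd m (CARD('a) - 1)"
    using bezout_nat[of m "CARD('a) - 1"] assms by auto
  have inv: "(x ^ m) ^ s = x" for x :: 'a
  proof (cases "x = 0")
    case True
    have "m * s \<noteq> 0" using st g by simp
    then show ?thesis using True by (simp add: power_mult[symmetric] del: power_mult)
  next
    case False
    have "(x ^ m) ^ s = (x ^ (CARD('a) - 1)) ^ t * x"
      unfolding power_mult[symmetric] st g by (simp add: power_add)
    then show ?thesis using ff_fermat[OF False] by simp
  qed
  have "inj (\<lambda>x::'a. x ^ m)" by (rule inj_on_inverseI[of _ "\<lambda>y. y ^ s"]) (rule inv)
  then show "bij (\<lambda>x::'a. x ^ m)" using finite_UNIV_inj_surj[of "\<lambda>x::'a. x ^ m"] by (simp add: bij_def)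
qed

theorem theorem2p6:
  fixes p e k :: nat
  assumes "prime p" and "odd p" and "e \<ge> 1" and "1 \<le> k" and "k \<le> e"
    and "CARD('a) = p ^ e"
  shows "permutation_polynomial (rev_dickson3 (p ^ k) (1::'a::{finite,field}))
         \<longleftrightarrow> gcd ((p ^ k - 1) div 2) (p ^ e - 1) = 1"
proof -
  define m where "m = (p ^ k - 1) div 2"
  have ch: "CHAR('a) = p" using CHAR_card[OF assms(1) assms(6)] .
  have F: "rev_dickson3 (p^k) (1::'a) = [:1,-4:] ^ m"
    unfolding m_def by (rule main_poly[OF assms(1,2,4) ch])
  have p3: "p \<ge> 3" using assms(1,2) prime_ge_2_nat[OF assms(1)] by (cases "p = 2") auto
  have "p^k \<ge> p^1" using assms(4) p3 by (intro power_increasing) auto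
  then have m1: "m \<ge> 1" using p3 unfolding m_def by simp
  have four: "(4::'a) \<noteq> 0"
  proof
    assume "(4::'a) = 0"
    then have "of_nat 4 = (0::'a)" by simp
    then have "p dvd 4" using ch of_nat_eq_0_iff_char_dvd by metis
    then have "p dvd 2 * 2" by simp
    then have "p dvd 2" using assms(1) prime_dvd_mult_iff by blast
    then have "p \<le> 2" by (rule dvd_imp_le) simp
    then show False using p3 by simp
  qed
  have fe: "(\<lambda>c. poly (rev_dickson3 (p^k) (1::'a)) c) = (\<lambda>c. c ^ m) \<circ> (\<lambda>c. 1 - 4 * c)"
    unfolding F by (auto simp: fun_eq_iff algebra_simps)
  have g: "bij (\<lambda>c::'a. 1 - 4 * c)"
    by (rule bij_betw_byWitness[of _ "\<lambda>c. (1 - c) / 4"]) (use four in \<open>auto simp: field_simps\<close>)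
  have h: "bij (\<lambda>c::'a. (1 - c) / 4)"
    by (rule bij_betw_byWitness[of _ "\<lambda>c. 1 - 4 * c"]) (use four in \<open>auto simp: field_simps\<close>)
  have bk: "(\<lambda>c::'a. c ^ m) = ((\<lambda>c. c ^ m) \<circ> (\<lambda>c. 1 - 4 * c)) \<circ> (\<lambda>c. (1 - c) / 4)"
    using four by (auto simp: fun_eq_iff field_simps)
  have "bij (\<lambda>c. poly (rev_dickson3 (p^k) (1::'a)) c) \<longleftrightarrow> bij (\<lambda>c::'a. c ^ m)"
  proof
    assume "bij (\<lambda>c. poly (rev_dickson3 (p^k) (1::'a)) c)"
    then show "bij (\<lambda>c::'a. c ^ m)" unfolding fe by (subst bk) (rule bij_comp[OF h])
  next
    assume "bij (\<lambda>c::'a. c ^ m)"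
    then show "bij (\<lambda>c. poly (rev_dickson3 (p^k) (1::'a)) c)" unfolding fe by (rule bij_comp[OF g])
  qed
  also have "\<dots> \<longleftrightarrow> gcd m (CARD('a) - 1) = 1" by (rule power_bij_iff[OF m1])
  finally show ?thesis unfolding permutation_polynomial_def m_def assms(6) .
qed

end
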